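(* Let $k,l$ be natural numbers, $\alpha,\beta\ge0$ real, and $\sigma,\tau$ complex numbers with $\sigma\tau\neq0$. Suppose that $\mathrm{BE}(k,l,\alpha,\beta,\sigma,\tau)$, $\mathrm{BE}(k,l,\alpha,\beta,-\sigma,-\tau)$, $\mathrm{BE}(k,l,\alpha,\beta,\sigma,-\tau)$ and $\mathrm{BE}(k,l,\alpha,\beta,-\sigma,\tau)$ all hold. Then $\mathrm{BE}(2k,2l,\alpha+k,\beta,\sigma^2,\tau^2)$ and $\mathrm{BE}(2k,2l,\alpha,\beta+l,\sigma^2,\tau^2)$ both hold.
   Context: The Fourier transform is $\hat\varphi(\xi,\eta)=\int_{\mathbb{R}^2}\varphi(x,y)e^{-2\pi i(x\xi+y\eta)}\,dx\,dy$. For real $\alpha,\beta\ge0$ and Schwartz functions $f,g$ on $\mathbb{R}^2$ set $\langle f,g\rangle_{W_2^{\alpha,\beta}}=\int_{\mathbb{R}^2}\hat f(\xi,\eta)\overline{\hat g(\xi,\eta)}|\xi|^{2\alpha}|\eta|^{2\beta}\,d\xi\,d\eta$. For natural $k,l$, real $\alpha,\beta\ge0$ and non-zero complex $\sigma,\tau$, the statement $\mathrm{BE}(k,l,\alpha,\beta,\sigma,\tau)$ means: there is a constant $C$ such that for all Schwartz functions $f,g$ on $\mathbb{R}^2$, $\left|\langle f,g\rangle_{W_2^{\alpha,\beta}}\right|\le C\,\|(\partial_1^k-\tau\partial_2^l)f\|_{L_1(\mathbb{R}^2)}\,\|(\partial_1^k-\sigma\partial_2^l)g\|_{L_1(\mathbb{R}^2)}$,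 where $\partial_j$ is differentiation in the $j$-th variable. *)

theory Defs
  imports "HOL-Analysis.Analysis"
begin

definition partial1 :: "(real \<times> real \<Rightarrow> complex) \<Rightarrow> (real \<times> real \<Rightarrow> complex)" where
  "partial1 f = (\<lambda>(x, y). vector_derivative (\<lambda>t. f (t, y)) (at x))"

definition partial2 :: "(real \<times> real \<Rightarrow> complex) \<Rightarrow> (real \<times> real \<Rightarrow> complex)" where
  "partial2 f = (\<lambda>(x, y). vector_derivative (\<lambda>t. f (x, t)) (at y))"

fun partials :: "bool list \<Rightarrow> (real \<times> real \<Rightarrow> complex) \<Rightarrow> (real \<times> real \<Rightarrow> complex)" where
  "partials [] f = f"
| "partials (b # bs) f = (if b then partial1 else partial2) (partials bs f)"

definition schwartz :: "(real \<times> real \<Rightarrow> complex) \<Rightarrow> bool" where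
  "schwartz f \<longleftrightarrow>
     (\<forall>ds. continuous_on UNIV (partials ds f)
        \<and> (\<forall>x y. (\<lambda>t. partials ds f (t, y)) differentiable (at x)
                 \<and> (\<lambda>t. partials ds f (x, t)) differentiable (at y))
        \<and> (\<forall>m n::nat. bounded (range (\<lambda>(x, y). (x ^ m * y ^ n) *\<^sub>R partials ds f (x, y)))))"

definition fourier2 :: "(real \<times> real \<Rightarrow> complex) \<Rightarrow> (real \<times> real \<Rightarrow> complex)" where
  "fourier2 f = (\<lambda>(\<xi>, \<eta>). integral\<^sup>L lborel
      (\<lambda>(x, y). f (x, y) * cis (- 2 * pi * (x * \<xi> + y * \<eta>))))"

definition W_inner :: "real \<Rightarrow> real \<Rightarrow> (real \<times> real \<Rightarrow> complex) \<Rightarrow> (real \<times> real \<Rightarrow> complex) \<Rightarrow> complex" where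
  "W_inner \<alpha> \<beta> f g = integral\<^sup>L lborel
      (\<lambda>(\<xi>, \<eta>). fourier2 f (\<xi>, \<eta>) * cnj (fourier2 g (\<xi>, \<eta>))
          * complex_of_real (\<bar>\<xi>\<bar> powr (2 * \<alpha>) * \<bar>\<eta>\<bar> powr (2 * \<beta>)))"

definition L1norm :: "(real \<times> real \<Rightarrow> complex) \<Rightarrow> real" where
  "L1norm h = integral\<^sup>L lborel (\<lambda>p. norm (h p))"

definition BE :: "nat \<Rightarrow> nat \<Rightarrow> real \<Rightarrow> real \<Rightarrow> complex \<Rightarrow> complex \<Rightarrow> bool" where
  "BE k l \<alpha> \<beta> \<sigma> \<tau> \<longleftrightarrow>
     (\<exists>C. \<forall>f g. schwartz f \<longrightarrow> schwartz g \<longrightarrow>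
        norm (W_inner \<alpha> \<beta> f g)
          \<le> C * L1norm (\<lambda>p. (partial1 ^^ k) f p - \<tau> * (partial2 ^^ l) f p)
              * L1norm (\<lambda>p. (partial1 ^^ k) g p - \<sigma> * (partial2 ^^ l) g p))"

end

theory Submission
  imports Defs "HOL-Probability.Sinc_Integral" "HOL-Real_Asymp.Real_Asymp"
begin

lemma partials_append: "partials (ds @ es) f = partials ds (partials es f)"
  by (induction ds) auto

lemma schwartz_partials: "schwartz f \<Longrightarrow> schwartz (partials es f)"
  unfolding schwartz_def partials_append[symmetric] by blast

lemma schwartz_partial1: "schwartz f \<Longrightarrow> schwartz (partial1 f)"
  using schwartz_partials[of f "[True]"] by simp

lemma schwartz_partial2: "schwartz f \<Longrightarrow> schwartz (partial2 f)"
  using schwartz_partials[of f "[False]"] by simp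

lemma schwartz_funpow1: "schwartz f \<Longrightarrow> schwartz ((partial1 ^^ k) f)"
  by (induction k) (auto intro: schwartz_partial1)

lemma schwartz_funpow2: "schwartz f \<Longrightarrow> schwartz ((partial2 ^^ k) f)"
  by (induction k) (auto intro: schwartz_partial2)

lemma schwartz_D:
  assumes "schwartz f"
  shows "continuous_on UNIV (partials ds f)"
    "(\<lambda>t. partials ds f (t, y)) differentiable (at x)"
    "(\<lambda>t. partials ds f (x, t)) differentiable (at y)"
    "bounded (range (\<lambda>(x, y). (x ^ m * y ^ n) *\<^sub>R partials ds f (x, y)))"
  using assms unfolding schwartz_def by blast+

lemma partial1_lin:
  assumes "\<And>x y. (\<lambda>t. f (t, y)) differentiable (at x)"
    "\<And>x y. (\<lambda>t. g (t, y)) differentiable (at x)"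
  shows "partial1 (\<lambda>p. a * f p + b * g p) = (\<lambda>p. a * partial1 f p + b * partial1 g p)"
proof (rule ext, clarify)
  fix x y
  have "((\<lambda>t. f (t, y)) has_vector_derivative vector_derivative (\<lambda>t. f (t, y)) (at x)) (at x)"
    using assms(1) vector_derivative_works by blast
  moreover have "((\<lambda>t. g (t, y)) has_vector_derivative vector_derivative (\<lambda>t. g (t, y)) (at x)) (at x)"
    using assms(2) vector_derivative_works by blast
  ultimately have "((\<lambda>t. a * f (t, y) + b * g (t, y)) has_vector_derivative
      a * vector_derivative (\<lambda>t. f (t, y)) (at x) + b * vector_derivative (\<lambda>t. g (t, y)) (at x)) (at x)"
    by (intro has_vector_derivative_add has_vector_derivative_mult_right)
  then show "partial1 (\<lambda>p. a * f p + b * g p) (x, y) = a * partial1 f (x, y) + b * partial1 g (x, y)"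
    unfolding partial1_def by (simp add: vector_derivative_at)
qed

lemma partial2_lin:
  assumes "\<And>x y. (\<lambda>t. f (x, t)) differentiable (at y)"
    "\<And>x y. (\<lambda>t. g (x, t)) differentiable (at y)"
  shows "partial2 (\<lambda>p. a * f p + b * g p) = (\<lambda>p. a * partial2 f p + b * partial2 g p)"
proof (rule ext, clarify)
  fix x y
  have "((\<lambda>t. f (x, t)) has_vector_derivative vector_derivative (\<lambda>t. f (x, t)) (at y)) (at y)"
    using assms(1) vector_derivative_works by blast
  moreover have "((\<lambda>t. g (x, t)) has_vector_derivative vector_derivative (\<lambda>t. g (x, t)) (at y)) (at y)"
    using assms(2) vector_derivative_works by blast
  ultimately have "((\<lambda>t. a * f (x, t) + b * g (x, t)) has_vector_derivative
      a * vector_derivative (\<lambda>t. f (x, t)) (at y) + b * vector_derivative (\<lambda>t. g (x, t)) (at y)) (at y)"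
    by (intro has_vector_derivative_add has_vector_derivative_mult_right)
  then show "partial2 (\<lambda>p. a * f p + b * g p) (x, y) = a * partial2 f (x, y) + b * partial2 g (x, y)"
    unfolding partial2_def by (simp add: vector_derivative_at)
qed

lemma partials_lin:
  assumes "schwartz f" "schwartz g"
  shows "partials ds (\<lambda>p. a * f p + b * g p) = (\<lambda>p. a * partials ds f p + b * partials ds g p)"
proof (induction ds)
  case Nil then show ?case by simp
next
  case (Cons d ds)
  show ?case
  proof (cases d)
    case True
    then show ?thesis using Cons
      by (simp add: partial1_lin schwartz_D[OF assms(1)] schwartz_D[OF assms(2)])
  next
    case False
    then show ?thesis using Cons
      by (simp add: partial2_lin schwartz_D[OF assms(1)] schwartz_D[OF assms(2)])
  qed
qed

lemma bounded_range_lin: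
  assumes "bounded (range F)" "bounded (range G)"
  shows "bounded (range (\<lambda>p. a * F p + b * (G p :: complex)))"
proof -
  obtain A where A: "\<And>p. norm (F p) \<le> A" using assms(1) by (auto simp: bounded_iff)
  obtain B where B: "\<And>p. norm (G p) \<le> B" using assms(2) by (auto simp: bounded_iff)
  have "norm (a * F p + b * G p) \<le> norm a * A + norm b * B" for p
  proof -
    have "norm (a * F p + b * G p) \<le> norm a * norm (F p) + norm b * norm (G p)"
      by (metis norm_mult norm_triangle_ineq)
    also have "\<dots> \<le> norm a * A + norm b * B"
      by (intro add_mono mult_left_mono A B) auto
    finally show ?thesis .
  qed
  then show ?thesis by (auto simp: bounded_iff)
qed

lemma schwartz_lin:
  assumes "schwartz f" "schwartz g"
  shows "schwartz (\<lambda>p. a * f p + b * g p)"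
  unfolding schwartz_def partials_lin[OF assms]
proof (intro allI conjI)
  fix ds
  show "continuous_on UNIV (\<lambda>p. a * partials ds f p + b * partials ds g p)"
    using schwartz_D(1)[OF assms(1)] schwartz_D(1)[OF assms(2)]
    by (intro continuous_intros) auto
  fix x y
  show "(\<lambda>t. a * partials ds f (t, y) + b * partials ds g (t, y)) differentiable at x"
    using schwartz_D(2)[OF assms(1)] schwartz_D(2)[OF assms(2)]
    by (intro derivative_intros) auto
  show "(\<lambda>t. a * partials ds f (x, t) + b * partials ds g (x, t)) differentiable at y"
    using schwartz_D(3)[OF assms(1)] schwartz_D(3)[OF assms(2)]
    by (intro derivative_intros) auto
next
  fix ds and m n :: nat
  have e: "(\<lambda>(x, y). (x ^ m * y ^ n) *\<^sub>R (a * partials ds f (x, y) + b * partials ds g (x, y)))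
     = (\<lambda>p. a * (case p of (x, y) \<Rightarrow> (x ^ m * y ^ n) *\<^sub>R partials ds f (x, y))
          + b * (case p of (x, y) \<Rightarrow> (x ^ m * y ^ n) *\<^sub>R partials ds g (x, y)))"
    by (auto simp: fun_eq_iff scaleR_conv_of_real algebra_simps)
  show "bounded (range (\<lambda>(x, y). (x ^ m * y ^ n) *\<^sub>R (a * partials ds f (x, y) + b * partials ds g (x, y))))"
    unfolding e by (intro bounded_range_lin schwartz_D(4)[OF assms(1)] schwartz_D(4)[OF assms(2)])
qed

lemma funpow1_lin:
  assumes "schwartz f" "schwartz g"
  shows "(partial1 ^^ k) (\<lambda>p. a * f p + b * g p) = (\<lambda>p. a * (partial1 ^^ k) f p + b * (partial1 ^^ k) g p)"
proof (induction k)
  case (Suc k)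
  show ?case using Suc schwartz_funpow1[OF assms(1), of k] schwartz_funpow1[OF assms(2), of k]
    by (simp add: partial1_lin schwartz_D(2)[of _ "[]", simplified])
qed simp

lemma funpow2_lin:
  assumes "schwartz f" "schwartz g"
  shows "(partial2 ^^ k) (\<lambda>p. a * f p + b * g p) = (\<lambda>p. a * (partial2 ^^ k) f p + b * (partial2 ^^ k) g p)"
proof (induction k)
  case (Suc k)
  show ?case using Suc schwartz_funpow2[OF assms(1), of k] schwartz_funpow2[OF assms(2), of k]
    by (simp add: partial2_lin schwartz_D(3)[of _ "[]", simplified])
qed simp

lemma mvt_vec:
  fixes g g' :: "real \<Rightarrow> complex"
  assumes "\<And>t. t \<in> closed_segment a b \<Longrightarrow> (g has_vector_derivative g' t) (at t)"
    "\<And>t. t \<in> closed_segment a b \<Longrightarrow> norm (g' t) \<le> B"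
  shows "norm (g b - g a) \<le> B * \<bar>b - a\<bar>"
proof -
  have "norm (g b - g a) \<le> B * norm (b - a)"
  proof (rule differentiable_bound[of "closed_segment a b" g "\<lambda>t h. h *\<^sub>R g' t"])
    show "convex (closed_segment a b)" by simp
    show "(g has_derivative (\<lambda>h. h *\<^sub>R g' x)) (at x within closed_segment a b)"
      if "x \<in> closed_segment a b" for x
      using assms(1)[OF that] by (auto simp: has_vector_derivative_def intro: has_derivative_at_withinI)
    show "onorm (\<lambda>h. h *\<^sub>R g' x) \<le> B" if "x \<in> closed_segment a b" for x
      using assms(2)[OF that] by (auto intro!: onorm_le) (metis abs_ge_zero mult.commute mult_left_mono)
  qed auto
  then show ?thesis by simp
qed

lemma mixed_bound:
  fixes F F1 F12 :: "real \<Rightarrow> real \<Rightarrow> complex"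
  assumes d1: "\<And>s t. ((\<lambda>s. F s t) has_vector_derivative F1 s t) (at s)"
    and d2: "\<And>s t. ((\<lambda>t. F1 s t) has_vector_derivative F12 s t) (at t)"
    and c: "isCont (\<lambda>p. F12 (fst p) (snd p)) (x0, y0)"
    and e: "e > 0"
  shows "\<exists>d>0. \<forall>h. \<bar>h\<bar> < d \<longrightarrow>
     norm (F (x0+h) (y0+h) - F (x0+h) y0 - F x0 (y0+h) + F x0 y0 - complex_of_real (h^2) * F12 x0 y0) \<le> e * h^2"
proof -
  define D where "D = F12 x0 y0"
  obtain d where d: "d > 0" and dd: "\<And>p. dist p (x0, y0) < d \<Longrightarrow> dist (F12 (fst p) (snd p)) D < e"
    using c e unfolding continuous_at_eps_delta D_def by (metis fst_conv snd_conv)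
  have near: "norm (F12 s t - D) \<le> e" if "\<bar>s - x0\<bar> < d/2" "\<bar>t - y0\<bar> < d/2" for s t
  proof -
    have "dist (s, t) (x0, y0) = sqrt ((dist s x0)\<^sup>2 + (dist t y0)\<^sup>2)"
      by (simp add: dist_Pair_Pair)
    also have "\<dots> \<le> \<bar>dist s x0\<bar> + \<bar>dist t y0\<bar>"
      by (rule sqrt_sum_squares_le_sum_abs)
    also have "\<dots> < d" using that by (simp add: dist_real_def)
    finally show ?thesis using dd[of "(s,t)"] by (simp add: dist_norm)
  qed
  have seg: "\<bar>u - a\<bar> \<le> \<bar>h\<bar>" if "u \<in> closed_segment a (a + h)" for u a h :: real
    using that by (auto simp: closed_segment_eq_real_ivl split: if_splits)
  show ?thesis
  proof (intro exI[of _ "d/2"] conjI allI impI)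
    show "d/2 > 0" using d by simp
    fix h :: real assume h: "\<bar>h\<bar> < d/2"
    have step1: "norm (F1 s (y0+h) - F1 s y0 - h * D) \<le> e * \<bar>h\<bar>" if s: "\<bar>s - x0\<bar> < d/2" for s
    proof -
      have "norm ((F1 s (y0+h) - of_real (y0+h) * D) - (F1 s y0 - of_real y0 * D)) \<le> e * \<bar>(y0 + h) - y0\<bar>"
      proof (rule mvt_vec[of y0 "y0+h" "\<lambda>t. F1 s t - of_real t * D" "\<lambda>t. F12 s t - D"])
        fix t assume t: "t \<in> closed_segment y0 (y0 + h)"
        show "((\<lambda>t. F1 s t - complex_of_real t * D) has_vector_derivative F12 s t - D) (at t)"
          using d2[where s=s and t=t] by (auto intro!: derivative_eq_intros simp: has_vector_derivative_def scaleR_conv_of_real fun_eq_iff algebra_simps)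
        show "norm (F12 s t - D) \<le> e"
          using near[OF s] seg[OF t] h by simp
      qed
      then show ?thesis by (simp add: algebra_simps)
    qed
    have "norm ((F (x0+h) (y0+h) - F (x0+h) y0 - of_real (x0+h) * (h * D))
           - (F x0 (y0+h) - F x0 y0 - of_real x0 * (h * D))) \<le> (e * \<bar>h\<bar>) * \<bar>(x0 + h) - x0\<bar>"
    proof (rule mvt_vec[of x0 "x0+h" "\<lambda>s. F s (y0+h) - F s y0 - of_real s * (h * D)"
          "\<lambda>s. F1 s (y0+h) - F1 s y0 - h * D"])
      fix s assume s: "s \<in> closed_segment x0 (x0 + h)"
      show "((\<lambda>s. F s (y0 + h) - F s y0 - complex_of_real s * (h * D)) has_vector_derivative
          F1 s (y0 + h) - F1 s y0 - h * D) (at s)"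
        using d1[where s=s and t="y0+h"] d1[where s=s and t=y0]
        by (auto intro!: derivative_eq_intros simp: has_vector_derivative_def scaleR_conv_of_real fun_eq_iff algebra_simps)
      show "norm (F1 s (y0 + h) - F1 s y0 - h * D) \<le> e * \<bar>h\<bar>"
        using step1 seg[OF s] h by simp
    qed
    then show "norm (F (x0+h) (y0+h) - F (x0+h) y0 - F x0 (y0+h) + F x0 y0 - complex_of_real (h^2) * F12 x0 y0) \<le> e * h^2"
      by (simp add: algebra_simps D_def power2_eq_square abs_mult_self_eq)
  qed
qed



lemma partial1_hvd:
  assumes "(\<lambda>t. g (t, y)) differentiable (at x)"
  shows "((\<lambda>t. g (t, y)) has_vector_derivative partial1 g (x, y)) (at x)"
  using vector_derivative_works assms unfolding partial1_def by auto

lemma partial2_hvd: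
  assumes "(\<lambda>t. g (x, t)) differentiable (at y)"
  shows "((\<lambda>t. g (x, t)) has_vector_derivative partial2 g (x, y)) (at y)"
  using vector_derivative_works assms unfolding partial2_def by auto

lemma schwartz_hvd1: "schwartz f \<Longrightarrow> ((\<lambda>t. partials ds f (t, y)) has_vector_derivative partial1 (partials ds f) (x, y)) (at x)"
  by (intro partial1_hvd schwartz_D)

lemma schwartz_hvd2: "schwartz f \<Longrightarrow> ((\<lambda>t. partials ds f (x, t)) has_vector_derivative partial2 (partials ds f) (x, y)) (at y)"
  by (intro partial2_hvd schwartz_D)

lemma eps_zero:
  fixes a :: real
  assumes "\<And>e. e > 0 \<Longrightarrow> a \<le> 2 * e" "a \<ge> 0"
  shows "a = 0"
  using assms(1)[of "a/4"] assms(2) by (cases "a > 0") auto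

lemma clairaut:
  assumes s: "schwartz f"
  shows "partial1 (partial2 f) = partial2 (partial1 f)"
proof (rule ext, clarify)
  fix x0 y0
  define D1 where "D1 = partial2 (partial1 f) (x0, y0)"
  define D2 where "D2 = partial1 (partial2 f) (x0, y0)"
  have c1: "isCont (\<lambda>p. partial2 (partial1 f) (fst p, snd p)) (x0, y0)"
    using schwartz_D(1)[OF s, of "[False, True]"] by (simp add: continuous_on_eq_continuous_at)
  have c2: "isCont (\<lambda>p. partial1 (partial2 f) (snd p, fst p)) (y0, x0)"
  proof -
    have "isCont (partial1 (partial2 f)) (x0, y0)"
      using schwartz_D(1)[OF s, of "[True, False]"] by (simp add: continuous_on_eq_continuous_at)
    then have "isCont (partial1 (partial2 f) \<circ> (\<lambda>p. (snd p, fst p))) (y0, x0)"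
      by (intro continuous_at_compose) (auto intro!: continuous_intros)
    then show ?thesis by (simp add: o_def)
  qed
  have "norm (D1 - D2) = 0"
  proof (rule eps_zero)
    fix e :: real assume e: "e > 0"
    obtain d1 where d1: "d1 > 0" and b1: "\<And>h. \<bar>h\<bar> < d1 \<Longrightarrow>
       norm (f (x0+h, y0+h) - f (x0+h, y0) - f (x0, y0+h) + f (x0, y0) - complex_of_real (h^2) * D1) \<le> e * h^2"
      using mixed_bound[of "\<lambda>s t. f (s, t)" "\<lambda>s t. partial1 f (s, t)" "\<lambda>s t. partial2 (partial1 f) (s, t)" x0 y0 e]
        schwartz_hvd1[OF s, of "[]"] schwartz_hvd2[OF s, of "[True]"] c1 e
      unfolding D1_def by auto
    obtain d2 where d2: "d2 > 0" and b2: "\<And>h. \<bar>h\<bar> < d2 \<Longrightarrow>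
       norm (f (x0+h, y0+h) - f (x0, y0+h) - f (x0+h, y0) + f (x0, y0) - complex_of_real (h^2) * D2) \<le> e * h^2"
      using mixed_bound[of "\<lambda>s t. f (t, s)" "\<lambda>s t. partial2 f (t, s)" "\<lambda>s t. partial1 (partial2 f) (t, s)" y0 x0 e]
        schwartz_hvd2[OF s, of "[]"] schwartz_hvd1[OF s, of "[False]"] c2 e
      unfolding D2_def by (auto simp: add.commute)
    define h where "h = min d1 d2 / 2"
    have h: "\<bar>h\<bar> < d1" "\<bar>h\<bar> < d2" "h > 0" using d1 d2 by (auto simp: h_def)
    have "norm (complex_of_real (h^2) * (D1 - D2)) \<le> e * h^2 + e * h^2"
      using norm_triangle_ineq4[of "f (x0+h, y0+h) - f (x0+h, y0) - f (x0, y0+h) + f (x0, y0) - complex_of_real (h^2) * D2"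
         "f (x0+h, y0+h) - f (x0+h, y0) - f (x0, y0+h) + f (x0, y0) - complex_of_real (h^2) * D1"]
        b1[OF h(1)] b2[OF h(2)]
      by (simp add: algebra_simps norm_minus_commute)
    moreover have "norm (complex_of_real (h^2) * (D1 - D2)) = h^2 * norm (D1 - D2)"
      by (simp only: norm_mult norm_of_real) simp
    ultimately have "h^2 * norm (D1 - D2) \<le> h^2 * (2 * e)"
      by (simp add: algebra_simps)
    then show "norm (D1 - D2) \<le> 2 * e"
      using h(3) by (simp add: mult_le_cancel_left)
  qed simp
  then show "partial1 (partial2 f) (x0, y0) = partial2 (partial1 f) (x0, y0)"
    by (simp add: D1_def D2_def)
qed

lemma commute12:
  assumes "schwartz f"
  shows "partial1 ((partial2 ^^ l) f) = (partial2 ^^ l) (partial1 f)"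
  using assms
proof (induction l arbitrary: f)
  case (Suc l)
  have "partial1 ((partial2 ^^ Suc l) f) = partial2 (partial1 ((partial2 ^^ l) f))"
    using clairaut[OF schwartz_funpow2[OF Suc.prems]] by simp
  also have "\<dots> = (partial2 ^^ Suc l) (partial1 f)"
    using Suc by simp
  finally show ?case .
qed simp

lemma commute_kl:
  assumes "schwartz f"
  shows "(partial1 ^^ k) ((partial2 ^^ l) f) = (partial2 ^^ l) ((partial1 ^^ k) f)"
proof (induction k)
  case (Suc k)
  then show ?case using commute12[OF schwartz_funpow1[OF assms, of k]] by simp
qed simp

lemma integrable_w1: "integrable lborel (\<lambda>x::real. inverse (1 + x^2))"
  using integrable_inverse_1_plus_square by (simp add: set_integrable_def einterval_def)

definition w2 :: "real \<times> real \<Rightarrow> real" where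
  "w2 p = inverse (1 + (fst p)^2) * inverse (1 + (snd p)^2)"

lemma w2_pos: "w2 p > 0"
  unfolding w2_def by (simp add: add_pos_nonneg)

lemma w2_cont: "continuous_on UNIV w2"
  unfolding w2_def by (auto intro!: continuous_intros simp: add_nonneg_eq_0_iff)

lemma w2_meas[measurable]: "w2 \<in> borel_measurable lborel"
  using borel_measurable_continuous_onI[OF w2_cont] by simp

lemma integrable_w2: "integrable lborel w2"
proof -
  let ?a = "\<lambda>x::real. inverse (1 + x^2)"
  have am[measurable]: "?a \<in> borel_measurable lborel"
    using borel_measurable_continuous_onI[of ?a] by (auto intro!: continuous_intros simp: add_nonneg_eq_0_iff)
  have fin: "(\<integral>\<^sup>+x. ennreal (?a x) \<partial>lborel) < \<infinity>"
    using integrable_w1 unfolding integrable_iff_bounded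
    by (simp add: add_nonneg_eq_0_iff)
  have "(\<integral>\<^sup>+p. ennreal (w2 p) \<partial>(lborel \<Otimes>\<^sub>M lborel)) = (\<integral>\<^sup>+x. \<integral>\<^sup>+y. ennreal (w2 (x, y)) \<partial>lborel \<partial>lborel)"
    by (rule lborel.nn_integral_fst[symmetric]) (simp add: lborel_prod)
  also have "\<dots> = (\<integral>\<^sup>+x. ennreal (?a x) * (\<integral>\<^sup>+y. ennreal (?a y) \<partial>lborel) \<partial>lborel)"
    by (intro nn_integral_cong) (simp add: w2_def ennreal_mult' nn_integral_cmult add_nonneg_eq_0_iff)
  also have "\<dots> = (\<integral>\<^sup>+x. ennreal (?a x) \<partial>lborel) * (\<integral>\<^sup>+y. ennreal (?a y) \<partial>lborel)"
    by (simp add: nn_integral_multc)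
  also have "\<dots> < \<infinity>" using fin by (simp add: ennreal_mult_less_top)
  finally have "(\<integral>\<^sup>+p. ennreal (w2 p) \<partial>lborel) < \<infinity>" by (simp add: lborel_prod)
  then show ?thesis
    by (intro integrableI_nonneg) (auto intro: less_imp_le w2_pos)
qed

lemma schwartz_decay:
  assumes "schwartz f"
  shows "\<exists>M. \<forall>p. norm (partials ds f p) \<le> M * w2 p"
proof -
  have bd: "\<exists>B. \<forall>x y. \<bar>x\<bar>^m * \<bar>y\<bar>^n * norm (partials ds f (x, y)) \<le> B" for m n
  proof -
    obtain B where "\<And>z. z \<in> range (\<lambda>(x, y). (x ^ m * y ^ n) *\<^sub>R partials ds f (x, y)) \<Longrightarrow> norm z \<le> B"
      using schwartz_D(4)[OF assms, where ds=ds and m=m and n=n] unfolding bounded_iff by blast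
    then have "\<bar>x\<bar>^m * \<bar>y\<bar>^n * norm (partials ds f (x, y)) \<le> B" for x y
      by (force simp: abs_mult power_abs)
    then show ?thesis by blast
  qed
  obtain B00 where B00: "\<And>x y. \<bar>x\<bar>^0 * \<bar>y\<bar>^0 * norm (partials ds f (x, y)) \<le> B00" using bd by blast
  obtain B20 where B20: "\<And>x y. \<bar>x\<bar>^2 * \<bar>y\<bar>^0 * norm (partials ds f (x, y)) \<le> B20" using bd by blast
  obtain B02 where B02: "\<And>x y. \<bar>x\<bar>^0 * \<bar>y\<bar>^2 * norm (partials ds f (x, y)) \<le> B02" using bd by blast
  obtain B22 where B22: "\<And>x y. \<bar>x\<bar>^2 * \<bar>y\<bar>^2 * norm (partials ds f (x, y)) \<le> B22" using bd by blast
  have "norm (partials ds f p) \<le> (B00 + B20 + B02 + B22) * w2 p" for p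
  proof (cases p)
    case (Pair x y)
    let ?n = "norm (partials ds f (x, y))"
    have "(1 + x^2) * (1 + y^2) * ?n \<le> B00 + B20 + B02 + B22"
      using B00[of x y] B20[of x y] B02[of x y] B22[of x y] by (simp add: algebra_simps)
    moreover have "(1 + x^2) * (1 + y^2) > 0" by (simp add: add_pos_nonneg)
    ultimately show ?thesis using Pair
      by (simp add: w2_def field_simps)
  qed
  then show ?thesis by blast
qed

lemma schwartz_meas[measurable]: "schwartz f \<Longrightarrow> partials ds f \<in> borel_measurable lborel"
  using borel_measurable_continuous_onI[OF schwartz_D(1)] by simp

lemma schwartz_integrable_mult:
  assumes "schwartz f" "c \<in> borel_measurable lborel" "\<And>p. norm (c p) \<le> 1"
  shows "integrable lborel (\<lambda>p. partials ds f p * c p)"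
proof -
  obtain M where M: "\<And>p. norm (partials ds f p) \<le> M * w2 p" using schwartz_decay[OF assms(1)] by blast
  have i: "integrable lborel (\<lambda>p. M * w2 p)" using integrable_w2 by simp
  have m: "(\<lambda>p. partials ds f p * c p) \<in> borel_measurable lborel"
    using schwartz_meas[OF assms(1)] assms(2) by measurable
  have ae: "AE p in lborel. norm (partials ds f p * c p) \<le> norm (M * w2 p)"
  proof (rule AE_I2)
    fix p
    have "norm (partials ds f p * c p) \<le> norm (partials ds f p) * 1"
      unfolding norm_mult by (intro mult_left_mono assms(3)) auto
    also have "\<dots> \<le> M * w2 p" using M by simp
    also have "\<dots> \<le> norm (M * w2 p)" by simp
    finally show "norm (partials ds f p * c p) \<le> norm (M * w2 p)" .
  qed
  show ?thesis by (rule Bochner_Integration.integrable_bound[OF i m ae])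
qed

lemma cont_cis_lin: "continuous_on UNIV (\<lambda>x::real. cis (c*x + b))"
  by (intro continuous_intros)

lemma isCont_cis_lin: "isCont (\<lambda>x::real. cis (c*x + b)) x"
  using cont_cis_lin by (simp add: continuous_on_eq_continuous_at)

lemma decay1:
  fixes g :: "real \<Rightarrow> complex"
  assumes b: "\<And>x. norm (g x) \<le> K * inverse (1 + x^2)" and m: "g \<in> borel_measurable lborel"
  shows "integrable lborel g" "(g \<longlongrightarrow> 0) at_top" "(g \<longlongrightarrow> 0) at_bot"
proof -
  have i: "integrable lborel (\<lambda>x. K * inverse (1 + x^2))" using integrable_w1 by simp
  have ae: "AE x in lborel. norm (g x) \<le> norm (K * inverse (1 + x^2))"
    by (intro AE_I2) (simp only: real_norm_def, rule order_trans[OF b abs_ge_self])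
  show "integrable lborel g" by (rule Bochner_Integration.integrable_bound[OF i m ae])
  have lt: "((\<lambda>x::real. K * inverse (1 + x^2)) \<longlongrightarrow> 0) at_top" by real_asymp
  show "(g \<longlongrightarrow> 0) at_top" by (rule Lim_null_comparison[OF always_eventually lt]) (use b in blast)
  have lb: "((\<lambda>x::real. K * inverse (1 + x^2)) \<longlongrightarrow> 0) at_bot" by real_asymp
  show "(g \<longlongrightarrow> 0) at_bot" by (rule Lim_null_comparison[OF always_eventually lb]) (use b in blast)
qed

lemma integrable_mult_cis:
  fixes g :: "real \<Rightarrow> complex"
  assumes "integrable lborel g"
  shows "integrable lborel (\<lambda>x. g x * cis (c * x + b))"
proof -
  have m: "(\<lambda>x. g x * cis (c * x + b)) \<in> borel_measurable lborel"
  proof -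
    have "(\<lambda>x. cis (c * x + b)) \<in> borel_measurable lborel"
      using borel_measurable_continuous_onI[OF cont_cis_lin] by simp
    then show ?thesis using borel_measurable_integrable[OF assms] by measurable
  qed
  show ?thesis
    by (rule Bochner_Integration.integrable_bound[OF assms m]) (simp add: norm_mult)
qed

lemma ibp_1d:
  fixes g g' :: "real \<Rightarrow> complex" and c b :: real
  assumes der: "\<And>x. (g has_vector_derivative g' x) (at x)"
    and cont: "continuous_on UNIV g'"
    and ig: "integrable lborel g" and ig': "integrable lborel g'"
    and lim1: "(g \<longlongrightarrow> 0) at_top" and lim2: "(g \<longlongrightarrow> 0) at_bot"
  shows "integral\<^sup>L lborel (\<lambda>x. g' x * cis (c*x + b))
       = - (\<i> * c) * integral\<^sup>L lborel (\<lambda>x. g x * cis (c*x + b))"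
proof -
  define H where "H x = g x * cis (c*x + b)" for x
  define H' where "H' x = g' x * cis (c*x + b) + g x * (\<i> * c * cis (c*x + b))" for x
  have dH: "(H has_vector_derivative H' x) (at x)" for x
    using der[of x] unfolding H_def H'_def has_vector_derivative_def
    by (auto intro!: derivative_eq_intros simp: algebra_simps scaleR_conv_of_real fun_eq_iff)
  have gc: "continuous_on UNIV g"
    using der by (meson continuous_at_imp_continuous_on has_vector_derivative_continuous)
  have cH': "isCont H' x" for x
    unfolding H'_def using cont gc
    by (auto intro!: continuous_intros isCont_cis_lin simp: continuous_on_eq_continuous_at)
  have i1: "integrable lborel (\<lambda>x. g' x * cis (c*x + b))" by (rule integrable_mult_cis[OF ig'])
  have i2: "integrable lborel (\<lambda>x. g x * cis (c*x + b))" by (rule integrable_mult_cis[OF ig])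
  have iH': "integrable lborel H'"
    unfolding H'_def using i1 i2
    by (intro Bochner_Integration.integrable_add) (auto simp: mult.assoc mult.left_commute[of "g _"])
  have "(LBINT x=-\<infinity>..\<infinity>. H' x) = 0 - 0"
  proof (rule interval_integral_FTC_integrable[where F=H])
    show "set_integrable lborel (einterval (- \<infinity>) \<infinity>) H'"
      using iH' by (simp add: set_integrable_def einterval_def)
    have "(H \<longlongrightarrow> 0) at_bot"
      unfolding H_def by (rule Lim_null_comparison[OF always_eventually tendsto_norm_zero[OF lim2]]) (simp add: norm_mult)
    then show "((H \<circ> real_of_ereal) \<longlongrightarrow> 0) (at_right (- \<infinity>))"
      by (simp add: ereal_tendsto_simps)
    have "(H \<longlongrightarrow> 0) at_top"
      unfolding H_def by (rule Lim_null_comparison[OF always_eventually tendsto_norm_zero[OF lim1]]) (simp add: norm_mult)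
    then show "((H \<circ> real_of_ereal) \<longlongrightarrow> 0) (at_left \<infinity>)"
      by (simp add: ereal_tendsto_simps)
  qed (auto intro: dH cH')
  then have "integral\<^sup>L lborel H' = 0"
    by (simp add: interval_lebesgue_integral_def set_lebesgue_integral_def einterval_def)
  moreover have "integral\<^sup>L lborel H' = integral\<^sup>L lborel (\<lambda>x. g' x * cis (c*x + b))
       + (\<i> * c) * integral\<^sup>L lborel (\<lambda>x. g x * cis (c*x + b))"
  proof -
    have "integral\<^sup>L lborel H' = integral\<^sup>L lborel (\<lambda>x. g' x * cis (c*x + b))
       + integral\<^sup>L lborel (\<lambda>x. (\<i> * c) * (g x * cis (c*x + b)))"
      unfolding H'_def using i1 i2
      by (subst Bochner_Integration.integral_add[symmetric]) (auto simp: algebra_simps)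
    then show ?thesis by simp
  qed
  ultimately show ?thesis by (simp add: algebra_simps eq_neg_iff_add_eq_0)
qed

definition Ek :: "real \<Rightarrow> real \<Rightarrow> real \<Rightarrow> real \<Rightarrow> complex" where
  "Ek \<xi> \<eta> x y = cis (- 2 * pi * (x * \<xi> + y * \<eta>))"

lemma fourier2_eq: "fourier2 h (\<xi>, \<eta>) = integral\<^sup>L lborel (\<lambda>(x, y). h (x, y) * Ek \<xi> \<eta> x y)"
  by (simp add: fourier2_def Ek_def)

lemma Ek_meas: "(\<lambda>p. Ek \<xi> \<eta> (fst p) (snd p)) \<in> borel_measurable lborel"
proof -
  have "continuous_on UNIV (\<lambda>p. Ek \<xi> \<eta> (fst p) (snd p))"
    unfolding Ek_def by (intro continuous_intros)
  then show ?thesis using borel_measurable_continuous_onI by simp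
qed

lemma schwartz_int_E:
  assumes "schwartz f"
  shows "integrable (lborel \<Otimes>\<^sub>M lborel) (\<lambda>(x, y). partials ds f (x, y) * Ek \<xi> \<eta> x y)"
proof -
  have "integrable lborel (\<lambda>p. partials ds f p * Ek \<xi> \<eta> (fst p) (snd p))"
    by (rule schwartz_integrable_mult[OF assms Ek_meas]) (simp add: Ek_def)
  then show ?thesis by (simp add: lborel_prod case_prod_unfold)
qed

lemma schwartz_slice1:
  assumes "schwartz f"
  shows "\<exists>K. \<forall>x. norm (partials ds f (x, y)) \<le> K * inverse (1 + x^2)"
        "(\<lambda>x. partials ds f (x, y)) \<in> borel_measurable lborel"
        "continuous_on UNIV (\<lambda>x. partials ds f (x, y))"
proof -
  obtain M where M: "\<And>p. norm (partials ds f p) \<le> M * w2 p" using schwartz_decay[OF assms] by blast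
  show "\<exists>K. \<forall>x. norm (partials ds f (x, y)) \<le> K * inverse (1 + x^2)"
  proof (intro exI[of _ "M * inverse (1 + y^2)"] allI)
    fix x show "norm (partials ds f (x, y)) \<le> M * inverse (1 + y^2) * inverse (1 + x^2)"
      using M[of "(x, y)"] by (simp add: w2_def mult_ac)
  qed
  show c: "continuous_on UNIV (\<lambda>x. partials ds f (x, y))"
    by (rule continuous_on_compose2[OF schwartz_D(1)[OF assms]]) (auto intro!: continuous_intros)
  show "(\<lambda>x. partials ds f (x, y)) \<in> borel_measurable lborel"
    using borel_measurable_continuous_onI[OF c] by simp
qed

lemma schwartz_slice2:
  assumes "schwartz f"
  shows "\<exists>K. \<forall>y. norm (partials ds f (x, y)) \<le> K * inverse (1 + y^2)"
        "(\<lambda>y. partials ds f (x, y)) \<in> borel_measurable lborel"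
        "continuous_on UNIV (\<lambda>y. partials ds f (x, y))"
proof -
  obtain M where M: "\<And>p. norm (partials ds f p) \<le> M * w2 p" using schwartz_decay[OF assms] by blast
  show "\<exists>K. \<forall>y. norm (partials ds f (x, y)) \<le> K * inverse (1 + y^2)"
  proof (intro exI[of _ "M * inverse (1 + x^2)"] allI)
    fix y show "norm (partials ds f (x, y)) \<le> M * inverse (1 + x^2) * inverse (1 + y^2)"
      using M[of "(x, y)"] by (simp add: w2_def mult_ac)
  qed
  show c: "continuous_on UNIV (\<lambda>y. partials ds f (x, y))"
    by (rule continuous_on_compose2[OF schwartz_D(1)[OF assms]]) (auto intro!: continuous_intros)
  show "(\<lambda>y. partials ds f (x, y)) \<in> borel_measurable lborel"
    using borel_measurable_continuous_onI[OF c] by simp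
qed

lemma fourier_partial1:
  assumes s: "schwartz f"
  shows "fourier2 (partial1 f) (\<xi>, \<eta>) = (\<i> * complex_of_real (2 * pi * \<xi>)) * fourier2 f (\<xi>, \<eta>)"
proof -
  define c where "c = \<i> * complex_of_real (2 * pi * \<xi>)"
  have inner: "integral\<^sup>L lborel (\<lambda>x. partial1 f (x, y) * Ek \<xi> \<eta> x y)
      = c * integral\<^sup>L lborel (\<lambda>x. f (x, y) * Ek \<xi> \<eta> x y)" for y
  proof -
    obtain K where K: "\<And>x. norm (partials [] f (x, y)) \<le> K * inverse (1 + x^2)"
      using schwartz_slice1(1)[OF s] by blast
    obtain K' where K': "\<And>x. norm (partials [True] f (x, y)) \<le> K' * inverse (1 + x^2)"
      using schwartz_slice1(1)[OF s] by blast
    note d0 = decay1[OF K schwartz_slice1(2)[OF s]]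
    note d1 = decay1[OF K' schwartz_slice1(2)[OF s]]
    have ek: "Ek \<xi> \<eta> x y = cis ((- 2 * pi * \<xi>) * x + (- 2 * pi * y * \<eta>))" for x
      unfolding Ek_def by (simp add: algebra_simps)
    have "integral\<^sup>L lborel (\<lambda>x. partial1 f (x, y) * cis ((- 2 * pi * \<xi>) * x + (- 2 * pi * y * \<eta>)))
       = - (\<i> * complex_of_real (- 2 * pi * \<xi>)) * integral\<^sup>L lborel (\<lambda>x. f (x, y) * cis ((- 2 * pi * \<xi>) * x + (- 2 * pi * y * \<eta>)))"
      by (rule ibp_1d) (use d0 d1 schwartz_hvd1[OF s, of "[]"] schwartz_slice1(3)[OF s, of "[True]"] in auto)
    then show ?thesis by (simp add: ek c_def)
  qed
  have "fourier2 (partial1 f) (\<xi>, \<eta>) = (\<integral>y. (\<integral>x. partial1 f (x, y) * Ek \<xi> \<eta> x y \<partial>lborel) \<partial>lborel)"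
    unfolding fourier2_eq
    using lborel_pair.integral_snd[OF schwartz_int_E[OF s, of "[True]"]] by (simp add: lborel_prod)
  also have "\<dots> = c * (\<integral>y. (\<integral>x. f (x, y) * Ek \<xi> \<eta> x y \<partial>lborel) \<partial>lborel)"
    by (simp add: inner)
  also have "(\<integral>y. (\<integral>x. f (x, y) * Ek \<xi> \<eta> x y \<partial>lborel) \<partial>lborel) = fourier2 f (\<xi>, \<eta>)"
    unfolding fourier2_eq
    using lborel_pair.integral_snd[OF schwartz_int_E[OF s, of "[]"]] by (simp add: lborel_prod)
  finally show ?thesis by (simp add: c_def)
qed

lemma fourier_partial2:
  assumes s: "schwartz f"
  shows "fourier2 (partial2 f) (\<xi>, \<eta>) = (\<i> * complex_of_real (2 * pi * \<eta>)) * fourier2 f (\<xi>, \<eta>)"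
proof -
  define c where "c = \<i> * complex_of_real (2 * pi * \<eta>)"
  have inner: "integral\<^sup>L lborel (\<lambda>y. partial2 f (x, y) * Ek \<xi> \<eta> x y)
      = c * integral\<^sup>L lborel (\<lambda>y. f (x, y) * Ek \<xi> \<eta> x y)" for x
  proof -
    obtain K where K: "\<And>y. norm (partials [] f (x, y)) \<le> K * inverse (1 + y^2)"
      using schwartz_slice2(1)[OF s] by blast
    obtain K' where K': "\<And>y. norm (partials [False] f (x, y)) \<le> K' * inverse (1 + y^2)"
      using schwartz_slice2(1)[OF s] by blast
    note d0 = decay1[OF K schwartz_slice2(2)[OF s]]
    note d1 = decay1[OF K' schwartz_slice2(2)[OF s]]
    have ek: "Ek \<xi> \<eta> x y = cis ((- 2 * pi * \<eta>) * y + (- 2 * pi * x * \<xi>))" for y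
      unfolding Ek_def by (simp add: algebra_simps)
    have "integral\<^sup>L lborel (\<lambda>y. partial2 f (x, y) * cis ((- 2 * pi * \<eta>) * y + (- 2 * pi * x * \<xi>)))
       = - (\<i> * complex_of_real (- 2 * pi * \<eta>)) * integral\<^sup>L lborel (\<lambda>y. f (x, y) * cis ((- 2 * pi * \<eta>) * y + (- 2 * pi * x * \<xi>)))"
      by (rule ibp_1d) (use d0 d1 schwartz_hvd2[OF s, of "[]"] schwartz_slice2(3)[OF s, of "[False]"] in auto)
    then show ?thesis by (simp add: ek c_def)
  qed
  have "fourier2 (partial2 f) (\<xi>, \<eta>) = (\<integral>x. (\<integral>y. partial2 f (x, y) * Ek \<xi> \<eta> x y \<partial>lborel) \<partial>lborel)"
    unfolding fourier2_eq
    using lborel_pair.integral_fst[OF schwartz_int_E[OF s, of "[False]"]] by (simp add: lborel_prod)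
  also have "\<dots> = c * (\<integral>x. (\<integral>y. f (x, y) * Ek \<xi> \<eta> x y \<partial>lborel) \<partial>lborel)"
    by (simp add: inner)
  also have "(\<integral>x. (\<integral>y. f (x, y) * Ek \<xi> \<eta> x y \<partial>lborel) \<partial>lborel) = fourier2 f (\<xi>, \<eta>)"
    unfolding fourier2_eq
    using lborel_pair.integral_fst[OF schwartz_int_E[OF s, of "[]"]] by (simp add: lborel_prod)
  finally show ?thesis by (simp add: c_def)
qed

lemma schwartz_integrable_E2:
  assumes "schwartz f"
  shows "integrable lborel (\<lambda>(x, y). f (x, y) * Ek \<xi> \<eta> x y)"
  using schwartz_int_E[OF assms, of "[]"] by (simp add: lborel_prod)

lemma fourier_lin:
  assumes "schwartz f" "schwartz g"
  shows "fourier2 (\<lambda>p. a * f p + b * g p) (\<xi>, \<eta>) = a * fourier2 f (\<xi>, \<eta>) + b * fourier2 g (\<xi>, \<eta>)"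
proof -
  have "fourier2 (\<lambda>p. a * f p + b * g p) (\<xi>, \<eta>)
      = integral\<^sup>L lborel (\<lambda>p. a * (case p of (x, y) \<Rightarrow> f (x, y) * Ek \<xi> \<eta> x y)
                            + b * (case p of (x, y) \<Rightarrow> g (x, y) * Ek \<xi> \<eta> x y))"
    unfolding fourier2_eq by (rule Bochner_Integration.integral_cong) (auto simp: algebra_simps)
  also have "\<dots> = a * fourier2 f (\<xi>, \<eta>) + b * fourier2 g (\<xi>, \<eta>)"
    unfolding fourier2_eq
    using schwartz_integrable_E2[OF assms(1), of \<xi> \<eta>] schwartz_integrable_E2[OF assms(2), of \<xi> \<eta>]
    by (subst Bochner_Integration.integral_add) auto
  finally show ?thesis .
qed

lemma fourier_funpow1:
  assumes "schwartz f"
  shows "fourier2 ((partial1 ^^ k) f) (\<xi>, \<eta>) = (\<i> * complex_of_real (2 * pi * \<xi>)) ^ k * fourier2 f (\<xi>, \<eta>)"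
proof (induction k)
  case (Suc k)
  then show ?case using fourier_partial1[OF schwartz_funpow1[OF assms, of k]] by simp
qed simp

lemma fourier_funpow2:
  assumes "schwartz f"
  shows "fourier2 ((partial2 ^^ k) f) (\<xi>, \<eta>) = (\<i> * complex_of_real (2 * pi * \<eta>)) ^ k * fourier2 f (\<xi>, \<eta>)"
proof (induction k)
  case (Suc k)
  then show ?case using fourier_partial2[OF schwartz_funpow2[OF assms, of k]] by simp
qed simp

lemma fourier_bound: "norm (fourier2 h (\<xi>, \<eta>)) \<le> L1norm h"
proof -
  have "norm (fourier2 h (\<xi>, \<eta>)) \<le> (\<integral>p. norm (case p of (x, y) \<Rightarrow> h (x, y) * Ek \<xi> \<eta> x y) \<partial>lborel)"
    unfolding fourier2_eq by (rule integral_norm_bound)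
  also have "\<dots> = L1norm h"
    unfolding L1norm_def
    by (rule Bochner_Integration.integral_cong) (auto simp: Ek_def norm_mult)
  finally show ?thesis .
qed

lemma fourier_decay_mono:
  assumes "schwartz g"
  shows "\<exists>C. \<forall>\<xi> \<eta>. \<bar>\<xi>\<bar>^a * \<bar>\<eta>\<bar>^b * norm (fourier2 g (\<xi>, \<eta>)) \<le> C"
proof -
  define L where "L = L1norm ((partial1 ^^ a) ((partial2 ^^ b) g))"
  have "\<bar>\<xi>\<bar>^a * \<bar>\<eta>\<bar>^b * norm (fourier2 g (\<xi>, \<eta>)) \<le> L / (2 * pi) ^ (a + b)" for \<xi> \<eta>
  proof -
    have "fourier2 ((partial1 ^^ a) ((partial2 ^^ b) g)) (\<xi>, \<eta>)
       = (\<i> * complex_of_real (2 * pi * \<xi>)) ^ a * ((\<i> * complex_of_real (2 * pi * \<eta>)) ^ b * fourier2 g (\<xi>, \<eta>))"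
      by (simp add: fourier_funpow1[OF schwartz_funpow2[OF assms]] fourier_funpow2[OF assms])
    then have "(2 * pi * \<bar>\<xi>\<bar>)^a * ((2 * pi * \<bar>\<eta>\<bar>)^b * norm (fourier2 g (\<xi>, \<eta>))) \<le> L"
      using fourier_bound[of "(partial1 ^^ a) ((partial2 ^^ b) g)" \<xi> \<eta>] unfolding L_def
      by (simp add: norm_mult norm_power abs_mult)
    then have "(2 * pi) ^ (a + b) * (\<bar>\<xi>\<bar>^a * \<bar>\<eta>\<bar>^b * norm (fourier2 g (\<xi>, \<eta>))) \<le> L"
      by (simp add: power_mult_distrib power_add mult_ac)
    then show ?thesis by (simp add: field_simps)
  qed
  then show ?thesis by blast
qed

lemma fourier_decay:
  assumes "schwartz g"
  shows "\<exists>C. \<forall>\<xi> \<eta>. (1 + \<bar>\<xi>\<bar>^a) * (1 + \<bar>\<eta>\<bar>^b) * norm (fourier2 g (\<xi>, \<eta>)) \<le> C"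
proof -
  obtain C1 where C1: "\<And>\<xi> \<eta>. \<bar>\<xi>\<bar>^0 * \<bar>\<eta>\<bar>^0 * norm (fourier2 g (\<xi>, \<eta>)) \<le> C1"
    using fourier_decay_mono[OF assms] by blast
  obtain C2 where C2: "\<And>\<xi> \<eta>. \<bar>\<xi>\<bar>^a * \<bar>\<eta>\<bar>^0 * norm (fourier2 g (\<xi>, \<eta>)) \<le> C2"
    using fourier_decay_mono[OF assms] by blast
  obtain C3 where C3: "\<And>\<xi> \<eta>. \<bar>\<xi>\<bar>^0 * \<bar>\<eta>\<bar>^b * norm (fourier2 g (\<xi>, \<eta>)) \<le> C3"
    using fourier_decay_mono[OF assms] by blast
  obtain C4 where C4: "\<And>\<xi> \<eta>. \<bar>\<xi>\<bar>^a * \<bar>\<eta>\<bar>^b * norm (fourier2 g (\<xi>, \<eta>)) \<le> C4"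
    using fourier_decay_mono[OF assms] by blast
  have "(1 + \<bar>\<xi>\<bar>^a) * (1 + \<bar>\<eta>\<bar>^b) * norm (fourier2 g (\<xi>, \<eta>)) \<le> C1 + C2 + C3 + C4" for \<xi> \<eta>
    using C1[of \<xi> \<eta>] C2[of \<xi> \<eta>] C3[of \<xi> \<eta>] C4[of \<xi> \<eta>] by (simp add: algebra_simps)
  then show ?thesis by blast
qed

lemma powr_poly_bound:
  fixes t a :: real
  assumes "a \<ge> 0"
  shows "\<bar>t\<bar> powr a * (1 + t^2) \<le> 4 * (1 + \<bar>t\<bar>^(nat \<lceil>a\<rceil> + 2))"
proof (cases "\<bar>t\<bar> \<le> 1")
  case True
  have "\<bar>t\<bar> powr a \<le> 1"
    using True assms powr_mono2[of a "\<bar>t\<bar>" 1] by simp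
  moreover have "t^2 \<le> 1" using True by (simp add: abs_square_le_1)
  ultimately have "\<bar>t\<bar> powr a * (1 + t^2) \<le> 1 * 2"
    by (intro mult_mono) auto
  then show ?thesis by (smt (verit) zero_le_power abs_ge_zero)
next
  case False
  then have t1: "\<bar>t\<bar> > 1" by simp
  have "\<bar>t\<bar> powr a \<le> \<bar>t\<bar> powr (real (nat \<lceil>a\<rceil>))"
  proof (rule powr_mono)
    show "a \<le> real (nat \<lceil>a\<rceil>)" 
    proof -
      have "real (nat \<lceil>a\<rceil>) = of_int \<lceil>a\<rceil>" using assms by simp
      then show ?thesis using le_of_int_ceiling[of a] by simp
    qed
  qed (use t1 in auto)
  also have "\<dots> = \<bar>t\<bar> ^ nat \<lceil>a\<rceil>" using t1 by (simp add: powr_realpow)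
  finally have p: "\<bar>t\<bar> powr a \<le> \<bar>t\<bar> ^ nat \<lceil>a\<rceil>" .
  have "1 \<le> \<bar>t\<bar>^2" by (rule one_le_power) (use t1 in simp)
  then have "1 + t^2 \<le> 2 * \<bar>t\<bar>^2" by simp
  have "\<bar>t\<bar> powr a * (1 + t^2) \<le> \<bar>t\<bar> ^ nat \<lceil>a\<rceil> * (2 * \<bar>t\<bar>^2)"
    by (intro mult_mono p \<open>1 + t^2 \<le> 2 * \<bar>t\<bar>^2\<close>) (auto simp: power2_eq_square)
  also have "\<dots> = 2 * \<bar>t\<bar>^(nat \<lceil>a\<rceil> + 2)" by (simp add: power_add power2_eq_square)
  also have "\<dots> \<le> 4 * (1 + \<bar>t\<bar>^(nat \<lceil>a\<rceil> + 2))" by simp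
  finally show ?thesis .
qed

lemma fourier_meas:
  assumes "schwartz g"
  shows "fourier2 g \<in> borel_measurable lborel"
proof -
  define K where "K q p = g p * cis (- 2 * pi * (fst p * fst q + snd p * snd q))" for q p :: "real \<times> real"
  have e: "fourier2 g = (\<lambda>q. \<integral>p. K q p \<partial>lborel)"
    by (auto simp: fun_eq_iff fourier2_def K_def case_prod_unfold)
  have c: "continuous_on UNIV (case_prod K)"
  proof -
    have cg: "continuous_on UNIV (\<lambda>x::(real\<times>real)\<times>(real\<times>real). g (snd x))"
      by (rule continuous_on_compose2[OF schwartz_D(1)[OF assms, of "[]", simplified]]) (auto intro: continuous_intros)
    show ?thesis unfolding K_def case_prod_unfold
      by (intro continuous_intros cg)
  qed
  have "case_prod K \<in> borel_measurable (lborel \<Otimes>\<^sub>M lborel)"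
    using borel_measurable_continuous_onI[OF c] by (simp add: lborel_prod)
  then show ?thesis unfolding e by (rule lborel.borel_measurable_lebesgue_integral)
qed

definition wt :: "real \<Rightarrow> real \<Rightarrow> real \<times> real \<Rightarrow> real" where
  "wt \<alpha> \<beta> q = \<bar>fst q\<bar> powr (2 * \<alpha>) * \<bar>snd q\<bar> powr (2 * \<beta>)"

lemma W_eq: "W_inner \<alpha> \<beta> f g = integral\<^sup>L lborel (\<lambda>q. fourier2 f q * cnj (fourier2 g q) * complex_of_real (wt \<alpha> \<beta> q))"
  unfolding W_inner_def wt_def by (simp add: case_prod_unfold)

lemma wt_meas[measurable]: "wt \<alpha> \<beta> \<in> borel_measurable lborel"
proof -
  have f: "fst \<in> borel_measurable (borel :: (real \<times> real) measure)"
    by (rule borel_measurable_continuous_onI) (intro continuous_intros)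
  have s: "snd \<in> borel_measurable (borel :: (real \<times> real) measure)"
    by (rule borel_measurable_continuous_onI) (intro continuous_intros)
  have "(\<lambda>q. \<bar>fst q\<bar> powr (2 * \<alpha>) * \<bar>snd q\<bar> powr (2 * \<beta>)) \<in> borel_measurable (borel :: (real \<times> real) measure)"
    by (intro borel_measurable_times measurable_abs_powr f s)
  then show ?thesis unfolding wt_def by simp
qed

lemma W_integrable:
  assumes f: "schwartz f" and g: "schwartz g" and "\<alpha> \<ge> 0" "\<beta> \<ge> 0"
  shows "integrable lborel (\<lambda>q. fourier2 f q * cnj (fourier2 g q) * complex_of_real (wt \<alpha> \<beta> q))"
proof -
  define a where "a = nat \<lceil>2 * \<alpha>\<rceil> + 2"
  define b where "b = nat \<lceil>2 * \<beta>\<rceil> + 2"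
  obtain C where C: "\<And>\<xi> \<eta>. (1 + \<bar>\<xi>\<bar>^a) * (1 + \<bar>\<eta>\<bar>^b) * norm (fourier2 g (\<xi>, \<eta>)) \<le> C"
    using fourier_decay[OF g] by blast
  define L where "L = L1norm f"
  have fm[measurable]: "fourier2 f \<in> borel_measurable lborel" by (rule fourier_meas[OF f])
  have gm[measurable]: "fourier2 g \<in> borel_measurable lborel" by (rule fourier_meas[OF g])
  have bound: "norm (fourier2 f q * cnj (fourier2 g q) * complex_of_real (wt \<alpha> \<beta> q)) \<le> (16 * L * C) * w2 q" for q
  proof (cases q)
    case (Pair \<xi> \<eta>)
    let ?A = "norm (fourier2 f (\<xi>, \<eta>))" and ?n = "norm (fourier2 g (\<xi>, \<eta>))"
    let ?P = "\<bar>\<xi>\<bar> powr (2 * \<alpha>)" and ?Q = "\<bar>\<eta>\<bar> powr (2 * \<beta>)"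
    let ?X = "1 + \<bar>\<xi>\<bar>^a" and ?Y = "1 + \<bar>\<eta>\<bar>^b"
    have A: "?A \<le> L" unfolding L_def by (rule fourier_bound)
    have P: "?P * (1 + \<xi>^2) \<le> 4 * ?X" unfolding a_def using powr_poly_bound[of "2 * \<alpha>" \<xi>] assms by simp
    have Q: "?Q * (1 + \<eta>^2) \<le> 4 * ?Y" unfolding b_def using powr_poly_bound[of "2 * \<beta>" \<eta>] assms by simp
    have L0: "0 \<le> L" using A norm_ge_zero order_trans by blast
    have AN: "?A * ?n \<le> L * ?n" by (rule mult_right_mono[OF A]) simp
    have PQ: "(?P * (1 + \<xi>^2)) * (?Q * (1 + \<eta>^2)) \<le> (4 * ?X) * (4 * ?Y)"
      by (rule mult_mono[OF P Q]) auto
    have "?A * ?n * ((?P * (1 + \<xi>^2)) * (?Q * (1 + \<eta>^2))) \<le> L * ?n * ((4 * ?X) * (4 * ?Y))"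
      by (rule mult_mono[OF AN PQ]) (use L0 in auto)
    then have "?A * ?n * (?P * (1 + \<xi>^2)) * (?Q * (1 + \<eta>^2)) \<le> L * ?n * (4 * ?X) * (4 * ?Y)"
      by (simp add: mult_ac)
    also have "\<dots> = 16 * L * (?X * ?Y * ?n)" by (simp add: algebra_simps)
    also have "\<dots> \<le> 16 * L * C"
      using C[of \<xi> \<eta>] L0 by (intro mult_left_mono) auto
    finally have *: "?A * ?n * (?P * (1 + \<xi>^2)) * (?Q * (1 + \<eta>^2)) \<le> 16 * L * C" .
    have pos: "(1 + \<xi>^2) * (1 + \<eta>^2) > 0" by (simp add: add_pos_nonneg)
    have "norm (fourier2 f q * cnj (fourier2 g q) * complex_of_real (wt \<alpha> \<beta> q)) = ?A * ?n * ?P * ?Q"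
      using Pair by (simp add: wt_def norm_mult)
    also have "\<dots> = (?A * ?n * (?P * (1 + \<xi>^2)) * (?Q * (1 + \<eta>^2))) * w2 q"
      using Pair pos by (simp add: w2_def field_simps)
    also have "\<dots> \<le> (16 * L * C) * w2 q"
      using * w2_pos[of q] by (intro mult_right_mono) auto
    finally show ?thesis .
  qed
  have i: "integrable lborel (\<lambda>q. (16 * L * C) * w2 q)" using integrable_w2 by simp
  have m1[measurable]: "(\<lambda>x. cnj (fourier2 g x)) \<in> borel_measurable lborel"
    by (rule measurable_compose[OF gm borel_measurable_continuous_onI]) (intro continuous_intros)
  have m2[measurable]: "(\<lambda>x. complex_of_real (wt \<alpha> \<beta> x)) \<in> borel_measurable lborel"
    by (rule measurable_compose[OF wt_meas borel_measurable_continuous_onI]) (intro continuous_intros)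
  have m: "(\<lambda>q. fourier2 f q * cnj (fourier2 g q) * complex_of_real (wt \<alpha> \<beta> q)) \<in> borel_measurable lborel"
    by measurable
  have ae: "AE q in lborel. norm (fourier2 f q * cnj (fourier2 g q) * complex_of_real (wt \<alpha> \<beta> q)) \<le> norm ((16 * L * C) * w2 q)"
  proof (intro AE_I2)
    fix q
    show "norm (fourier2 f q * cnj (fourier2 g q) * complex_of_real (wt \<alpha> \<beta> q)) \<le> norm ((16 * L * C) * w2 q)"
      using bound[of q] abs_ge_self[of "(16 * L * C) * w2 q"] unfolding real_norm_def by linarith
  qed
  show ?thesis by (rule Bochner_Integration.integrable_bound[OF i m ae])
qed

lemma W_lin1:
  assumes "schwartz f1" "schwartz f2" "schwartz g" "\<alpha> \<ge> 0" "\<beta> \<ge> 0"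
  shows "W_inner \<alpha> \<beta> (\<lambda>p. a * f1 p + b * f2 p) g = a * W_inner \<alpha> \<beta> f1 g + b * W_inner \<alpha> \<beta> f2 g"
proof -
  let ?I = "\<lambda>h q. fourier2 h q * cnj (fourier2 g q) * complex_of_real (wt \<alpha> \<beta> q)"
  have "W_inner \<alpha> \<beta> (\<lambda>p. a * f1 p + b * f2 p) g = integral\<^sup>L lborel (\<lambda>q. a * ?I f1 q + b * ?I f2 q)"
    unfolding W_eq
  proof (rule Bochner_Integration.integral_cong[OF refl])
    fix q :: "real \<times> real"
    obtain \<xi> \<eta> where q: "q = (\<xi>, \<eta>)" by (cases q)
    show "fourier2 (\<lambda>p. a * f1 p + b * f2 p) q * cnj (fourier2 g q) * complex_of_real (wt \<alpha> \<beta> q)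
        = a * ?I f1 q + b * ?I f2 q"
      unfolding q fourier_lin[OF assms(1,2)] by (simp add: algebra_simps)
  qed
  also have "\<dots> = a * W_inner \<alpha> \<beta> f1 g + b * W_inner \<alpha> \<beta> f2 g"
    unfolding W_eq
    using W_integrable[OF assms(1,3,4,5)] W_integrable[OF assms(2,3,4,5)]
    by (subst Bochner_Integration.integral_add) auto
  finally show ?thesis .
qed

lemma W_lin2:
  assumes "schwartz f" "schwartz g1" "schwartz g2" "\<alpha> \<ge> 0" "\<beta> \<ge> 0"
  shows "W_inner \<alpha> \<beta> f (\<lambda>p. a * g1 p + b * g2 p) = cnj a * W_inner \<alpha> \<beta> f g1 + cnj b * W_inner \<alpha> \<beta> f g2"
proof -
  let ?I = "\<lambda>h q. fourier2 f q * cnj (fourier2 h q) * complex_of_real (wt \<alpha> \<beta> q)"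
  have "W_inner \<alpha> \<beta> f (\<lambda>p. a * g1 p + b * g2 p) = integral\<^sup>L lborel (\<lambda>q. cnj a * ?I g1 q + cnj b * ?I g2 q)"
    unfolding W_eq
  proof (rule Bochner_Integration.integral_cong[OF refl])
    fix q :: "real \<times> real"
    obtain \<xi> \<eta> where q: "q = (\<xi>, \<eta>)" by (cases q)
    show "fourier2 f q * cnj (fourier2 (\<lambda>p. a * g1 p + b * g2 p) q) * complex_of_real (wt \<alpha> \<beta> q)
        = cnj a * ?I g1 q + cnj b * ?I g2 q"
      unfolding q fourier_lin[OF assms(2,3)] by (simp add: algebra_simps)
  qed
  also have "\<dots> = cnj a * W_inner \<alpha> \<beta> f g1 + cnj b * W_inner \<alpha> \<beta> f g2"
    unfolding W_eq
    using W_integrable[OF assms(1,2,4,5)] W_integrable[OF assms(1,3,4,5)]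
    by (subst Bochner_Integration.integral_add) auto
  finally show ?thesis .
qed

lemma cpow_cnj:
  fixes c :: complex and k :: nat
  shows "c ^ k * cnj (c ^ k) = complex_of_real (norm c ^ (2 * k))"
  using complex_norm_square[of "c ^ k"] by (simp add: norm_power power_mult mult.commute[of 2 k])

lemma W_shift1:
  assumes "schwartz f" "schwartz g" "k \<ge> 1"
  shows "W_inner \<alpha> \<beta> ((partial1 ^^ k) f) ((partial1 ^^ k) g)
       = complex_of_real ((2 * pi) ^ (2 * k)) * W_inner (\<alpha> + real k) \<beta> f g"
proof -
  have "W_inner \<alpha> \<beta> ((partial1 ^^ k) f) ((partial1 ^^ k) g)
     = integral\<^sup>L lborel (\<lambda>q. complex_of_real ((2 * pi) ^ (2 * k)) *
           (fourier2 f q * cnj (fourier2 g q) * complex_of_real (wt (\<alpha> + real k) \<beta> q)))"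
    unfolding W_eq
  proof (rule Bochner_Integration.integral_cong[OF refl])
    fix q :: "real \<times> real"
    obtain \<xi> \<eta> where q: "q = (\<xi>, \<eta>)" by (cases q)
    define c where "c = \<i> * complex_of_real (2 * pi * \<xi>)"
    have nc: "norm c = 2 * pi * \<bar>\<xi>\<bar>" by (simp add: c_def norm_mult abs_mult)
    have wt: "norm c ^ (2 * k) * wt \<alpha> \<beta> (\<xi>, \<eta>) = (2 * pi) ^ (2 * k) * wt (\<alpha> + real k) \<beta> (\<xi>, \<eta>)"
    proof (cases "\<xi> = 0")
      case True then show ?thesis using assms(3) by (simp add: nc wt_def)
    next
      case False
      have "\<bar>\<xi>\<bar> powr (2 * (\<alpha> + real k)) = \<bar>\<xi>\<bar> powr (2 * \<alpha>) * \<bar>\<xi>\<bar> powr (real (2 * k))"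
        by (simp add: powr_add[symmetric] algebra_simps)
      also have "\<dots> = \<bar>\<xi>\<bar> powr (2 * \<alpha>) * \<bar>\<xi>\<bar> ^ (2 * k)"
      proof -
        have pw: "\<bar>\<xi>\<bar> powr (real (2 * k)) = \<bar>\<xi>\<bar> ^ (2 * k)"
          by (rule powr_realpow) (use False in simp)
        show ?thesis by (simp only: pw)
      qed
      finally show ?thesis by (simp add: nc wt_def power_mult_distrib)
    qed
    have "fourier2 ((partial1 ^^ k) f) q * cnj (fourier2 ((partial1 ^^ k) g) q) * complex_of_real (wt \<alpha> \<beta> q)
        = (c ^ k * cnj (c ^ k)) * complex_of_real (wt \<alpha> \<beta> q) * (fourier2 f q * cnj (fourier2 g q))"
      unfolding q fourier_funpow1[OF assms(1)] fourier_funpow1[OF assms(2)] c_def by (simp add: algebra_simps)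
    also have "\<dots> = complex_of_real (norm c ^ (2 * k) * wt \<alpha> \<beta> q) * (fourier2 f q * cnj (fourier2 g q))"
      by (subst cpow_cnj) simp
    also have "\<dots> = complex_of_real ((2 * pi) ^ (2 * k)) *
           (fourier2 f q * cnj (fourier2 g q) * complex_of_real (wt (\<alpha> + real k) \<beta> q))"
      unfolding q wt by (simp add: algebra_simps)
    finally show "fourier2 ((partial1 ^^ k) f) q * cnj (fourier2 ((partial1 ^^ k) g) q) * complex_of_real (wt \<alpha> \<beta> q)
        = complex_of_real ((2 * pi) ^ (2 * k)) *
           (fourier2 f q * cnj (fourier2 g q) * complex_of_real (wt (\<alpha> + real k) \<beta> q))" .
  qed
  also have "\<dots> = complex_of_real ((2 * pi) ^ (2 * k)) * W_inner (\<alpha> + real k) \<beta> f g"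
    unfolding W_eq by simp
  finally show ?thesis .
qed

lemma W_shift2:
  assumes "schwartz f" "schwartz g" "l \<ge> 1"
  shows "W_inner \<alpha> \<beta> ((partial2 ^^ l) f) ((partial2 ^^ l) g)
       = complex_of_real ((2 * pi) ^ (2 * l)) * W_inner \<alpha> (\<beta> + real l) f g"
proof -
  have "W_inner \<alpha> \<beta> ((partial2 ^^ l) f) ((partial2 ^^ l) g)
     = integral\<^sup>L lborel (\<lambda>q. complex_of_real ((2 * pi) ^ (2 * l)) *
           (fourier2 f q * cnj (fourier2 g q) * complex_of_real (wt \<alpha> (\<beta> + real l) q)))"
    unfolding W_eq
  proof (rule Bochner_Integration.integral_cong[OF refl])
    fix q :: "real \<times> real"
    obtain \<xi> \<eta> where q: "q = (\<xi>, \<eta>)" by (cases q)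
    define c where "c = \<i> * complex_of_real (2 * pi * \<eta>)"
    have nc: "norm c = 2 * pi * \<bar>\<eta>\<bar>" by (simp add: c_def norm_mult abs_mult)
    have wt: "norm c ^ (2 * l) * wt \<alpha> \<beta> (\<xi>, \<eta>) = (2 * pi) ^ (2 * l) * wt \<alpha> (\<beta> + real l) (\<xi>, \<eta>)"
    proof (cases "\<eta> = 0")
      case True then show ?thesis using assms(3) by (simp add: nc wt_def)
    next
      case False
      have "\<bar>\<eta>\<bar> powr (2 * (\<beta> + real l)) = \<bar>\<eta>\<bar> powr (2 * \<beta>) * \<bar>\<eta>\<bar> powr (real (2 * l))"
        by (simp add: powr_add[symmetric] algebra_simps)
      also have "\<dots> = \<bar>\<eta>\<bar> powr (2 * \<beta>) * \<bar>\<eta>\<bar> ^ (2 * l)"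
      proof -
        have pw: "\<bar>\<eta>\<bar> powr (real (2 * l)) = \<bar>\<eta>\<bar> ^ (2 * l)"
          by (rule powr_realpow) (use False in simp)
        show ?thesis by (simp only: pw)
      qed
      finally show ?thesis by (simp add: nc wt_def power_mult_distrib)
    qed
    have "fourier2 ((partial2 ^^ l) f) q * cnj (fourier2 ((partial2 ^^ l) g) q) * complex_of_real (wt \<alpha> \<beta> q)
        = (c ^ l * cnj (c ^ l)) * complex_of_real (wt \<alpha> \<beta> q) * (fourier2 f q * cnj (fourier2 g q))"
      unfolding q fourier_funpow2[OF assms(1)] fourier_funpow2[OF assms(2)] c_def by (simp add: algebra_simps)
    also have "\<dots> = complex_of_real (norm c ^ (2 * l) * wt \<alpha> \<beta> q) * (fourier2 f q * cnj (fourier2 g q))"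
      by (subst cpow_cnj) simp
    also have "\<dots> = complex_of_real ((2 * pi) ^ (2 * l)) *
           (fourier2 f q * cnj (fourier2 g q) * complex_of_real (wt \<alpha> (\<beta> + real l) q))"
      unfolding q wt by (simp add: algebra_simps)
    finally show "fourier2 ((partial2 ^^ l) f) q * cnj (fourier2 ((partial2 ^^ l) g) q) * complex_of_real (wt \<alpha> \<beta> q)
        = complex_of_real ((2 * pi) ^ (2 * l)) *
           (fourier2 f q * cnj (fourier2 g q) * complex_of_real (wt \<alpha> (\<beta> + real l) q))" .
  qed
  also have "\<dots> = complex_of_real ((2 * pi) ^ (2 * l)) * W_inner \<alpha> (\<beta> + real l) f g"
    unfolding W_eq by simp
  finally show ?thesis .
qed

lemma op_identity:
  assumes f: "schwartz f"
  shows "(\<lambda>p. (partial1 ^^ k) (\<lambda>q. 1 * (partial1 ^^ k) f q + t * (partial2 ^^ l) f q) p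
            - t * (partial2 ^^ l) (\<lambda>q. 1 * (partial1 ^^ k) f q + t * (partial2 ^^ l) f q) p)
       = (\<lambda>p. (partial1 ^^ (2 * k)) f p - t\<^sup>2 * (partial2 ^^ (2 * l)) f p)"
proof -
  have A: "schwartz ((partial1 ^^ k) f)" by (rule schwartz_funpow1[OF f])
  have B: "schwartz ((partial2 ^^ l) f)" by (rule schwartz_funpow2[OF f])
  have e1: "(partial1 ^^ k) ((partial1 ^^ k) f) = (partial1 ^^ (2 * k)) f"
    by (simp only: mult_2 funpow_add o_apply)
  have e2: "(partial2 ^^ l) ((partial2 ^^ l) f) = (partial2 ^^ (2 * l)) f"
    by (simp only: mult_2 funpow_add o_apply)
  show ?thesis
    unfolding funpow1_lin[OF A B] funpow2_lin[OF A B] e1 e2 commute_kl[OF f]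
    by (auto simp: fun_eq_iff power2_eq_square algebra_simps)
qed

lemma L1norm_nonneg: "L1norm h \<ge> 0"
  unfolding L1norm_def by simp

lemma four_bound:
  fixes X1 X2 X3 X4 c :: complex
  assumes "norm X1 \<le> C1 * P * Q" "norm X2 \<le> C2 * P * Q" "norm X3 \<le> C3 * P * Q" "norm X4 \<le> C4 * P * Q"
  shows "norm (c * (X1 + X2 + X3 + X4)) \<le> (norm c * (C1 + C2 + C3 + C4)) * P * Q"
proof -
  have "norm (X1 + X2 + X3 + X4) \<le> norm X1 + norm X2 + norm X3 + norm X4"
    using norm_triangle_ineq[of "X1+X2+X3" X4] norm_triangle_ineq[of "X1+X2" X3] norm_triangle_ineq[of X1 X2]
    by linarith
  also have "\<dots> \<le> (C1 + C2 + C3 + C4) * P * Q" using assms by (simp add: algebra_simps)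
  finally have "norm c * norm (X1 + X2 + X3 + X4) \<le> norm c * ((C1 + C2 + C3 + C4) * P * Q)"
    by (intro mult_left_mono) auto
  then show ?thesis by (simp add: norm_mult mult_ac)
qed

theorem lemma5:
  fixes k l :: nat and \<alpha> \<beta> :: real and \<sigma> \<tau> :: complex
  assumes "k \<ge> 1" and "l \<ge> 1"
    and "\<alpha> \<ge> 0" and "\<beta> \<ge> 0"
    and "\<sigma> * \<tau> \<noteq> 0"
    and "BE k l \<alpha> \<beta> \<sigma> \<tau>"
    and "BE k l \<alpha> \<beta> (- \<sigma>) (- \<tau>)"
    and "BE k l \<alpha> \<beta> \<sigma> (- \<tau>)"
    and "BE k l \<alpha> \<beta> (- \<sigma>) \<tau>"
  shows "BE (2 * k) (2 * l) (\<alpha> + real k) \<beta> (\<sigma>\<^sup>2) (\<tau>\<^sup>2)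
       \<and> BE (2 * k) (2 * l) \<alpha> (\<beta> + real l) (\<sigma>\<^sup>2) (\<tau>\<^sup>2)"
proof -
  have s0: "\<sigma> \<noteq> 0" and t0: "\<tau> \<noteq> 0" using assms(5) by auto
  obtain C1 where C1: "\<And>f g. schwartz f \<Longrightarrow> schwartz g \<Longrightarrow> norm (W_inner \<alpha> \<beta> f g)
      \<le> C1 * L1norm (\<lambda>p. (partial1 ^^ k) f p - \<tau> * (partial2 ^^ l) f p)
           * L1norm (\<lambda>p. (partial1 ^^ k) g p - \<sigma> * (partial2 ^^ l) g p)"
    using assms(6) unfolding BE_def by blast
  obtain C2 where C2: "\<And>f g. schwartz f \<Longrightarrow> schwartz g \<Longrightarrow> norm (W_inner \<alpha> \<beta> f g)
      \<le> C2 * L1norm (\<lambda>p. (partial1 ^^ k) f p - (- \<tau>) * (partial2 ^^ l) f p)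
           * L1norm (\<lambda>p. (partial1 ^^ k) g p - (- \<sigma>) * (partial2 ^^ l) g p)"
    using assms(7) unfolding BE_def by blast
  obtain C3 where C3: "\<And>f g. schwartz f \<Longrightarrow> schwartz g \<Longrightarrow> norm (W_inner \<alpha> \<beta> f g)
      \<le> C3 * L1norm (\<lambda>p. (partial1 ^^ k) f p - (- \<tau>) * (partial2 ^^ l) f p)
           * L1norm (\<lambda>p. (partial1 ^^ k) g p - \<sigma> * (partial2 ^^ l) g p)"
    using assms(8) unfolding BE_def by blast
  obtain C4 where C4: "\<And>f g. schwartz f \<Longrightarrow> schwartz g \<Longrightarrow> norm (W_inner \<alpha> \<beta> f g)
      \<le> C4 * L1norm (\<lambda>p. (partial1 ^^ k) f p - \<tau> * (partial2 ^^ l) f p)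
           * L1norm (\<lambda>p. (partial1 ^^ k) g p - (- \<sigma>) * (partial2 ^^ l) g p)"
    using assms(9) unfolding BE_def by blast
  define U where "U f t = (\<lambda>q. 1 * (partial1 ^^ k) f q + t * (partial2 ^^ l) f q)" for f t
  have sU: "schwartz f \<Longrightarrow> schwartz (U f t)" for f t
    unfolding U_def by (intro schwartz_lin schwartz_funpow1 schwartz_funpow2)
  have opU: "schwartz f \<Longrightarrow> L1norm (\<lambda>p. (partial1 ^^ k) (U f t) p - t * (partial2 ^^ l) (U f t) p)
      = L1norm (\<lambda>p. (partial1 ^^ (2 * k)) f p - t\<^sup>2 * (partial2 ^^ (2 * l)) f p)" for f t
    unfolding U_def by (simp only: op_identity)
  define P where "P f s = L1norm (\<lambda>p. (partial1 ^^ (2 * k)) f p - s\<^sup>2 * (partial2 ^^ (2 * l)) f p)" for f s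
  have bounds: "norm (W_inner \<alpha> \<beta> (U f \<tau>) (U g \<sigma>)) \<le> C1 * P f \<tau> * P g \<sigma>"
    "norm (W_inner \<alpha> \<beta> (U f (- \<tau>)) (U g (- \<sigma>))) \<le> C2 * P f \<tau> * P g \<sigma>"
    "norm (W_inner \<alpha> \<beta> (U f (- \<tau>)) (U g \<sigma>)) \<le> C3 * P f \<tau> * P g \<sigma>"
    "norm (W_inner \<alpha> \<beta> (U f \<tau>) (U g (- \<sigma>))) \<le> C4 * P f \<tau> * P g \<sigma>"
    if f: "schwartz f" and g: "schwartz g" for f g
  proof -
    show "norm (W_inner \<alpha> \<beta> (U f \<tau>) (U g \<sigma>)) \<le> C1 * P f \<tau> * P g \<sigma>"
      using C1[OF sU[OF f, of \<tau>] sU[OF g, of \<sigma>]] unfolding opU[OF f, of \<tau>] opU[OF g, of \<sigma>] P_def .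
    show "norm (W_inner \<alpha> \<beta> (U f (- \<tau>)) (U g (- \<sigma>))) \<le> C2 * P f \<tau> * P g \<sigma>"
      using C2[OF sU[OF f, of "- \<tau>"] sU[OF g, of "- \<sigma>"]] unfolding opU[OF f, of "- \<tau>"] opU[OF g, of "- \<sigma>"] P_def by simp
    show "norm (W_inner \<alpha> \<beta> (U f (- \<tau>)) (U g \<sigma>)) \<le> C3 * P f \<tau> * P g \<sigma>"
      using C3[OF sU[OF f, of "- \<tau>"] sU[OF g, of "\<sigma>"]] unfolding opU[OF f, of "- \<tau>"] opU[OF g, of "\<sigma>"] P_def by simp
    show "norm (W_inner \<alpha> \<beta> (U f \<tau>) (U g (- \<sigma>))) \<le> C4 * P f \<tau> * P g \<sigma>"
      using C4[OF sU[OF f, of "\<tau>"] sU[OF g, of "- \<sigma>"]] unfolding opU[OF f, of "\<tau>"] opU[OF g, of "- \<sigma>"] P_def by simp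
  qed
  have decA: "(partial1 ^^ k) f = (\<lambda>p. (1/2) * U f t p + (1/2) * U f (- t) p)" for f t
    unfolding U_def by (auto simp: fun_eq_iff field_simps)
  have decB: "(partial2 ^^ l) f = (\<lambda>p. (1/(2*t)) * U f t p + (- (1/(2*t))) * U f (- t) p)"
    if "t \<noteq> 0" for f t
    using that unfolding U_def by (auto simp: fun_eq_iff field_simps)
  have W4: "W_inner \<alpha> \<beta> (\<lambda>p. a * U f \<tau> p + b * U f (- \<tau>) p) (\<lambda>p. c * U g \<sigma> p + d * U g (- \<sigma>) p)
     = a * cnj c * W_inner \<alpha> \<beta> (U f \<tau>) (U g \<sigma>) + a * cnj d * W_inner \<alpha> \<beta> (U f \<tau>) (U g (- \<sigma>))
       + b * cnj c * W_inner \<alpha> \<beta> (U f (- \<tau>)) (U g \<sigma>) + b * cnj d * W_inner \<alpha> \<beta> (U f (- \<tau>)) (U g (- \<sigma>))"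
    if f: "schwartz f" and g: "schwartz g" for f g a b c d
    using assms(3,4) sU[OF f] sU[OF g]
    by (simp add: W_lin1 W_lin2 schwartz_lin algebra_simps)
  have conj1: "BE (2 * k) (2 * l) (\<alpha> + real k) \<beta> (\<sigma>\<^sup>2) (\<tau>\<^sup>2)"
  proof -
    define c0 :: complex where "c0 = inverse (complex_of_real ((2 * pi) ^ (2 * k))) * (1/4)"
    show ?thesis unfolding BE_def
    proof (intro exI[of _ "norm c0 * (C1 + C4 + C3 + C2)"] allI impI)
      fix f g assume f: "schwartz f" and g: "schwartz g"
      have "W_inner \<alpha> \<beta> ((partial1 ^^ k) f) ((partial1 ^^ k) g)
         = complex_of_real ((2 * pi) ^ (2 * k)) * W_inner (\<alpha> + real k) \<beta> f g"
        by (rule W_shift1[OF f g assms(1)])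
      then have "W_inner (\<alpha> + real k) \<beta> f g
          = inverse (complex_of_real ((2 * pi) ^ (2 * k))) * W_inner \<alpha> \<beta> ((partial1 ^^ k) f) ((partial1 ^^ k) g)"
        by (simp add: field_simps)
      also have "W_inner \<alpha> \<beta> ((partial1 ^^ k) f) ((partial1 ^^ k) g)
         = (1/4) * (W_inner \<alpha> \<beta> (U f \<tau>) (U g \<sigma>) + W_inner \<alpha> \<beta> (U f \<tau>) (U g (- \<sigma>))
              + W_inner \<alpha> \<beta> (U f (- \<tau>)) (U g \<sigma>) + W_inner \<alpha> \<beta> (U f (- \<tau>)) (U g (- \<sigma>)))"
        unfolding decA[of f \<tau>] decA[of g \<sigma>] W4[OF f g] by (simp add: algebra_simps)
      finally have eq: "W_inner (\<alpha> + real k) \<beta> f g = c0 * (W_inner \<alpha> \<beta> (U f \<tau>) (U g \<sigma>) + W_inner \<alpha> \<beta> (U f \<tau>) (U g (- \<sigma>))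
              + W_inner \<alpha> \<beta> (U f (- \<tau>)) (U g \<sigma>) + W_inner \<alpha> \<beta> (U f (- \<tau>)) (U g (- \<sigma>)))"
        unfolding c0_def by (simp add: mult_ac)
      have "norm (W_inner (\<alpha> + real k) \<beta> f g) \<le> norm c0 * (C1 + C4 + C3 + C2) * P f \<tau> * P g \<sigma>"
        unfolding eq by (rule four_bound) (use bounds[OF f g] in auto)
      then show "norm (W_inner (\<alpha> + real k) \<beta> f g) \<le> norm c0 * (C1 + C4 + C3 + C2)
          * L1norm (\<lambda>p. (partial1 ^^ (2 * k)) f p - \<tau>\<^sup>2 * (partial2 ^^ (2 * l)) f p)
          * L1norm (\<lambda>p. (partial1 ^^ (2 * k)) g p - \<sigma>\<^sup>2 * (partial2 ^^ (2 * l)) g p)"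
        unfolding P_def .
    qed
  qed
  have conj2: "BE (2 * k) (2 * l) \<alpha> (\<beta> + real l) (\<sigma>\<^sup>2) (\<tau>\<^sup>2)"
  proof -
    define a :: complex where "a = 1/(2*\<tau>)"
    define b :: complex where "b = 1/(2*\<sigma>)"
    define c0 :: complex where "c0 = inverse (complex_of_real ((2 * pi) ^ (2 * l))) * (a * cnj b)"
    show ?thesis unfolding BE_def
    proof (intro exI[of _ "norm c0 * (C1 + C4 + C3 + C2)"] allI impI)
      fix f g assume f: "schwartz f" and g: "schwartz g"
      have "W_inner \<alpha> \<beta> ((partial2 ^^ l) f) ((partial2 ^^ l) g)
         = complex_of_real ((2 * pi) ^ (2 * l)) * W_inner \<alpha> (\<beta> + real l) f g"
        by (rule W_shift2[OF f g assms(2)])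
      then have "W_inner \<alpha> (\<beta> + real l) f g
          = inverse (complex_of_real ((2 * pi) ^ (2 * l))) * W_inner \<alpha> \<beta> ((partial2 ^^ l) f) ((partial2 ^^ l) g)"
        by (simp add: field_simps)
      also have "W_inner \<alpha> \<beta> ((partial2 ^^ l) f) ((partial2 ^^ l) g)
         = (a * cnj b) * (W_inner \<alpha> \<beta> (U f \<tau>) (U g \<sigma>) + - W_inner \<alpha> \<beta> (U f \<tau>) (U g (- \<sigma>))
              + - W_inner \<alpha> \<beta> (U f (- \<tau>)) (U g \<sigma>) + W_inner \<alpha> \<beta> (U f (- \<tau>)) (U g (- \<sigma>)))"
        unfolding decB[OF t0, of f] decB[OF s0, of g] W4[OF f g] a_def b_def
        by (simp add: algebra_simps)
      finally have eq: "W_inner \<alpha> (\<beta> + real l) f g = c0 * (W_inner \<alpha> \<beta> (U f \<tau>) (U g \<sigma>) + - W_inner \<alpha> \<beta> (U f \<tau>) (U g (- \<sigma>))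
              + - W_inner \<alpha> \<beta> (U f (- \<tau>)) (U g \<sigma>) + W_inner \<alpha> \<beta> (U f (- \<tau>)) (U g (- \<sigma>)))"
        unfolding c0_def by (simp add: mult_ac)
      have "norm (W_inner \<alpha> (\<beta> + real l) f g) \<le> norm c0 * (C1 + C4 + C3 + C2) * P f \<tau> * P g \<sigma>"
        unfolding eq by (rule four_bound) (use bounds[OF f g] in auto)
      then show "norm (W_inner \<alpha> (\<beta> + real l) f g) \<le> norm c0 * (C1 + C4 + C3 + C2)
          * L1norm (\<lambda>p. (partial1 ^^ (2 * k)) f p - \<tau>\<^sup>2 * (partial2 ^^ (2 * l)) f p)
          * L1norm (\<lambda>p. (partial1 ^^ (2 * k)) g p - \<sigma>\<^sup>2 * (partial2 ^^ (2 * l)) g p)"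
        unfolding P_def .
    qed
  qed
  show ?thesis using conj1 conj2 by blast
qed


end
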